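(* Let $p$ be an odd prime, $c\in\mathbb Z_p$ with $c\not\equiv0,\pm1\pmod p$ and $c^2+1\not\equiv0\pmod p$. Then the congruence $x^4-2(c^2+1)x^2+c^2(c^2+1)\equiv0\pmod p$ is solvable if and only if $$\sum_{k=1}^{[p/4]}\binom{4k}{2k}\frac1{(16(c^2+1))^k}\equiv0\pmod p.$$
   Context: $[x]$ is the greatest integer $\le x$; $\mathbb Z_p$ is the set of rational numbers whose denominator is not divisible by $p$. *)

theory Defs
  imports Complex_Main "HOL-Computational_Algebra.Primes"
begin

definition in_Zp :: "nat \<Rightarrow> rat \<Rightarrow> bool" where
  "in_Zp p r \<longleftrightarrow> \<not> int p dvd snd (quotient_of r)"

text \<open>Congruence modulo p between elements of Z_p: a = b (mod p) iff a - b lies in p Z_p,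
  i.e. both are in Z_p and the reduced numerator of a - b is divisible by p.\<close>
definition rat_cong :: "rat \<Rightarrow> rat \<Rightarrow> nat \<Rightarrow> bool" where
  "rat_cong a b p \<longleftrightarrow> in_Zp p a \<and> in_Zp p b \<and> int p dvd fst (quotient_of (a - b))"

end

theory Submission
  imports Defs "HOL-Number_Theory.Number_Theory"
begin


lemma rat_frac_cong0:
  fixes A B :: int
  assumes p: "prime p" and B0: "B \<noteq> 0" and pB: "\<not> int p dvd B"
  shows "rat_cong (of_int A / of_int B) 0 p \<longleftrightarrow> int p dvd A"
proof -
  obtain N D where q: "quotient_of (of_int A / of_int B) = (N, D)" by (cases "quotient_of (of_int A / of_int B)") auto
  have D0: "D > 0" using q quotient_of_denom_pos by blast
  have cop: "coprime N D" using q quotient_of_coprime by blast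
  have "of_int A / of_int B = (of_int N / of_int D :: rat)" using q quotient_of_div by blast
  hence eq: "N * B = A * D" using B0 D0
    by (simp add: field_simps) (metis of_int_eq_iff of_int_mult)
  have "D dvd N * B" using eq by simp
  hence "D dvd B" using cop by (metis coprime_commute coprime_dvd_mult_right_iff)
  hence pD: "\<not> int p dvd D" using pB dvd_trans by blast
  have p1: "p \<noteq> 1" using p by auto
  have pp: "prime (int p)" using p by simp
  have "int p dvd N \<longleftrightarrow> int p dvd A"
  proof
    assume "int p dvd N" hence "int p dvd A * D" using eq by (metis dvd_mult2)
    thus "int p dvd A" using pD pp prime_dvd_mult_iff by blast
  next
    assume "int p dvd A" hence "int p dvd N * B" using eq by (metis dvd_mult2)
    thus "int p dvd N" using pB pp prime_dvd_mult_iff by blast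
  qed
  moreover have "in_Zp p (of_int A / of_int B)" using q pD p1 by (simp add: in_Zp_def)
  moreover have "in_Zp p 0" using p1 by (simp add: in_Zp_def)
  ultimately show ?thesis using q p1 by (simp add: rat_cong_def)
qed



lemma central_step: "Suc m * ((2*Suc m) choose Suc m) = 2*(2*m+1) * ((2*m) choose m)"
proof -
  have i: "Suc m * (Suc (2*m) choose Suc m) = Suc (2*m) * ((2*m) choose m)"
    using Suc_times_binomial[of m "2*m"] .
  have ii: "Suc m * (Suc (Suc (2*m)) choose Suc m) = Suc (Suc (2*m)) * (Suc (2*m) choose m)"
    using Suc_times_binomial[of m "Suc (2*m)"] .
  have sym: "Suc (2*m) choose m = Suc (2*m) choose Suc m"
    using binomial_symmetric[of m "Suc (2*m)"] by (simp add: Suc_diff_le)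
  have "Suc m * (Suc m * ((2*Suc m) choose Suc m)) = Suc m * (2*(2*m+1) * ((2*m) choose m))"
  proof -
    have "Suc m * (Suc m * ((2*Suc m) choose Suc m)) = Suc m * (Suc (Suc (2*m)) * (Suc (2*m) choose m))"
      using ii by (simp del: binomial_Suc_Suc)
    also have "\<dots> = Suc (Suc (2*m)) * (Suc m * (Suc (2*m) choose Suc m))" using sym by (simp del: binomial_Suc_Suc)
    also have "\<dots> = Suc (Suc (2*m)) * (Suc (2*m) * ((2*m) choose m))" using i by (simp del: binomial_Suc_Suc)
    also have "\<dots> = Suc m * (2*(2*m+1) * ((2*m) choose m))" by (simp del: binomial_Suc_Suc)
    finally show ?thesis .
  qed
  thus ?thesis by (metis mult_left_cancel nat.distinct(1))
qed

lemma absorb_step: "Suc m * (n choose Suc m) = (n - m) * (n choose m)"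
  using binomial_absorption[of m n] binomial_absorb_comp[of n m] by simp

lemma central_cong:
  fixes p :: nat
  assumes p: "prime p" "odd p" and mn: "m \<le> (p - 1) div 2"
  shows "[int ((2*m) choose m) = (-4)^m * int (((p - 1) div 2) choose m)] (mod int p)"
  using mn
proof (induction m)
  case 0 then show ?case by simp
next
  case (Suc m)
  define n where "n = (p - 1) div 2"
  have pn0: "p = 2*n+1" unfolding n_def using p(2) by (auto elim!: oddE)
  have pn: "int p = 2 * int n + 1" using pn0 by simp
  have mn: "m < n" using Suc.prems n_def by simp
  define X where "X = int ((2*m) choose m)"
  define Y where "Y = int (n choose m)"
  have IH: "int p dvd X - (-4)^m * Y" using Suc.IH mn unfolding X_def Y_def n_def
    by (simp add: cong_iff_dvd_diff dvd_diff_commute)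
  have e1: "int (Suc m) * int ((2*Suc m) choose Suc m) = 2*(2*int m+1) * X"
    using arg_cong[OF central_step[of m], of int] unfolding X_def by (simp del: binomial_Suc_Suc add: algebra_simps)
  have e2: "int (Suc m) * int (n choose Suc m) = (int n - int m) * Y"
    using arg_cong[OF absorb_step[of m n], of int] mn unfolding Y_def by (simp add: of_nat_diff algebra_simps)
  define Z1 where "Z1 = int ((2*Suc m) choose Suc m)"
  define Z2 where "Z2 = int (n choose Suc m)"
  have "int (Suc m) * (Z1 - (-4)^(Suc m) * Z2) = int (Suc m) * Z1 - (-4)^(Suc m) * (int (Suc m) * Z2)"
    by (simp add: algebra_simps)
  also have "\<dots> = 2*(2*int m+1) * X - (-4)^(Suc m) * ((int n - int m) * Y)"
    using e1 e2 unfolding Z1_def Z2_def by simp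
  also have "\<dots> = 2*(2*int m+1) * (X - (-4)^m * Y) + (-4)^m * Y * (2 * int p)"
    using pn by (simp add: algebra_simps)
  finally have EQ: "int (Suc m) * (int ((2*Suc m) choose Suc m) - (-4)^(Suc m) * int (n choose Suc m))
      = 2*(2*int m+1) * (X - (-4)^m * Y) + (-4)^m * Y * (2 * int p)" unfolding Z1_def Z2_def .
  hence d: "int p dvd int (Suc m) * (int ((2*Suc m) choose Suc m) - (-4)^(Suc m) * int (n choose Suc m))"
  proof -
    have "int p dvd 2*(2*int m+1) * (X - (-4)^m * Y) + (-4)^m * Y * (2 * int p)"
      using IH by (intro dvd_add dvd_mult) auto
    thus ?thesis using EQ by simp
  qed
  have "\<not> int p dvd int (Suc m)"
  proof
    assume "int p dvd int (Suc m)"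
    hence "p dvd Suc m" using int_dvd_int_iff by blast
    hence "p \<le> Suc m" by (simp add: dvd_imp_le)
    thus False using mn pn by simp
  qed
  hence "int p dvd (int ((2*Suc m) choose Suc m) - (-4)^(Suc m) * int (n choose Suc m))"
    using d p(1) prime_dvd_mult_iff[of "int p"] by (simp del: binomial_Suc_Suc)
  thus ?case unfolding n_def by (simp add: cong_iff_dvd_diff)
qed



definition evs :: "nat \<Rightarrow> 'a::comm_ring_1 \<Rightarrow> 'a" where
  "evs m s = (\<Sum>k\<le>m. of_nat (m choose (2*k)) * s^k)"
definition ods :: "nat \<Rightarrow> 'a::comm_ring_1 \<Rightarrow> 'a" where
  "ods m s = (\<Sum>k\<le>m. of_nat (m choose (2*k+1)) * s^k)"

lemma binom_split:
  fixes r :: "'a::comm_ring_1"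
  shows "(1+r)^m = evs m (r^2) + r * ods m (r^2)"
proof -
  define g where "g i = of_nat (m choose i) * r^i" for i
  have "(1+r)^m = (r+1)^m" by (simp add: add.commute)
  also have "\<dots> = (\<Sum>i\<le>m. g i)" unfolding g_def by (simp add: binomial_ring)
  also have "\<dots> = (\<Sum>i\<le>Suc(2*m). g i)"
    by (rule sum.mono_neutral_left) (auto simp: g_def binomial_eq_0)
  also have "\<dots> = (\<Sum>i\<le>m. g (2*i) + g (Suc (2*i)))" by (rule sum.in_pairs_0)
  also have "\<dots> = evs m (r^2) + r * ods m (r^2)"
    unfolding evs_def ods_def g_def sum.distrib sum_distrib_left
    by (intro arg_cong2[where f="(+)"] sum.cong) (auto simp: power_mult algebra_simps simp flip: power_mult_distrib power_mult)
  finally show ?thesis .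
qed

lemma binom_split_minus:
  fixes r :: "'a::comm_ring_1"
  shows "(1-r)^m = evs m (r^2) - r * ods m (r^2)"
  using binom_split[of "-r" m] by simp

lemma evs_of_int: "of_int (evs m s) = evs m (of_int s :: 'a::comm_ring_1)"
  by (simp add: evs_def)
lemma ods_of_int: "of_int (ods m s) = ods m (of_int s :: 'a::comm_ring_1)"
  by (simp add: ods_def)

lemma doubling:
  fixes s :: int
  assumes "s > 0"
  shows "evs (2*n) s = (evs n s)^2 + s * (ods n s)^2" "ods (2*n) s = 2 * evs n s * ods n s"
proof -
  define r where "r = sqrt (of_int s)"
  have r2: "r^2 = of_int s" using assms by (simp add: r_def)
  have r0: "r \<noteq> 0" using assms by (simp add: r_def)
  define E where "E = evs n (of_int s :: real)"
  define F where "F = ods n (of_int s :: real)"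
  define G where "G = evs (2*n) (of_int s :: real)"
  define H where "H = ods (2*n) (of_int s :: real)"
  have a: "G + r * H = (E + r*F)^2"
    using binom_split[of r "2*n"] binom_split[of r n] unfolding E_def F_def G_def H_def r2
    by (simp add: power_mult power2_eq_square mult.commute)
  have b: "G - r * H = (E - r*F)^2"
    using binom_split_minus[of r "2*n"] binom_split_minus[of r n] unfolding E_def F_def G_def H_def r2
    by (simp add: power_mult power2_eq_square mult.commute)
  have c1: "G = E^2 + of_int s * F^2"
  proof -
    have "2*G = (E + r*F)^2 + (E - r*F)^2" using a b by (simp add: algebra_simps)
    also have "\<dots> = 2*(E^2 + r^2 * F^2)" by (simp add: power2_eq_square algebra_simps)
    finally show ?thesis using r2 by simp
  qed
  have c2: "H = 2 * E * F"
  proof -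
    have "2*r*H = (E + r*F)^2 - (E - r*F)^2" using a b by (simp add: algebra_simps)
    also have "\<dots> = 2*r*(2*E*F)" by (simp add: power2_eq_square algebra_simps)
    finally show ?thesis using r0 by simp
  qed
  show "evs (2*n) s = (evs n s)^2 + s * (ods n s)^2"
    using c1 unfolding E_def F_def G_def evs_of_int[symmetric] ods_of_int[symmetric]
    by (metis (mono_tags) of_int_eq_iff of_int_add of_int_mult of_int_power)
  show "ods (2*n) s = 2 * evs n s * ods n s"
    using c2 unfolding E_def F_def H_def evs_of_int[symmetric] ods_of_int[symmetric]
    by (metis (mono_tags) of_int_eq_iff of_int_mult of_int_numeral)
qed

lemma choose_pm1:
  fixes p :: nat
  assumes p: "prime p" and j: "j \<le> p - 1"
  shows "[int ((p - 1) choose j) = (-1)^j] (mod int p)"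
  using j
proof (induction j)
  case 0 then show ?case by simp
next
  case (Suc j)
  have p0: "p \<noteq> 0" using p by auto
  have eq: "p choose Suc j = ((p-1) choose j) + ((p-1) choose Suc j)"
    using binomial_Suc_Suc[of "p-1" j] p0 by simp
  have "p dvd (p choose Suc j)" using dvd_choose_prime[of "Suc j" p] Suc.prems p p0 by simp
  hence "int p dvd int ((p-1) choose j) + int ((p-1) choose Suc j)"
    using eq by (metis int_dvd_int_iff of_nat_add)
  moreover have "int p dvd int ((p-1) choose j) - (-1)^j" using Suc by (simp add: cong_iff_dvd_diff dvd_diff_commute)
  ultimately have "int p dvd (int ((p-1) choose j) + int ((p-1) choose Suc j)) - (int ((p-1) choose j) - (-1)^j)"
    by (rule dvd_diff)
  thus ?case by (simp add: cong_iff_dvd_diff dvd_diff_commute)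
qed



lemma inv_mod:
  fixes P a :: int
  assumes "prime P" "\<not> P dvd a"
  shows "\<exists>x. P dvd a * x - 1"
proof -
  have "coprime a P" using prime_imp_coprime[OF assms] by (simp add: coprime_commute)
  then obtain x where "[a * x = 1] (mod P)" using cong_solve_coprime_int by blast
  thus ?thesis by (auto simp: cong_iff_dvd_diff)
qed

lemma euler_pm:
  fixes p :: nat and a :: int
  assumes p: "prime p" "odd p" and a: "\<not> int p dvd a"
  shows "QuadRes (int p) a \<Longrightarrow> int p dvd a^((p-1) div 2) - 1"
    and "\<not> QuadRes (int p) a \<Longrightarrow> int p dvd a^((p-1) div 2) + 1"
proof -
  have p2: "2 < p" using p prime_ge_2_nat by (metis dvd_refl le_neq_implies_less)
  have e: "[Legendre a (int p) = a ^ ((p - 1) div 2)] (mod p)" using euler_criterion[OF p(1) p2] .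
  have nz: "\<not> [a = 0] (mod int p)" using a by (simp add: cong_0_iff)
  show "QuadRes (int p) a \<Longrightarrow> int p dvd a^((p-1) div 2) - 1"
    using e nz unfolding Legendre_def by (simp add: cong_iff_dvd_diff dvd_diff_commute)
  show "\<not> QuadRes (int p) a \<Longrightarrow> int p dvd a^((p-1) div 2) + 1"
    using e nz unfolding Legendre_def by (simp add: cong_iff_dvd_diff dvd_diff_commute)
qed

lemma evs_cong:
  fixes P a b :: int
  assumes "P dvd a - b"
  shows "P dvd evs m a - evs m b"
proof -
  have "[a = b] (mod P)" using assms by (simp add: cong_iff_dvd_diff)
  hence "[evs m a = evs m b] (mod P)" unfolding evs_def
    by (intro cong_sum cong_mult cong_pow) auto
  thus ?thesis by (simp add: cong_iff_dvd_diff)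
qed



lemma dvd_cancel_prime:
  fixes P a b :: int
  assumes "prime P" "P dvd a * b" "\<not> P dvd a"
  shows "P dvd b"
  using assms prime_dvd_mult_iff by blast

lemma dl2: "(P::int) dvd f1 \<Longrightarrow> P dvd f2 \<Longrightarrow> X = a1*f1 + a2*f2 \<Longrightarrow> P dvd X"
  by simp
lemma dl3: "(P::int) dvd f1 \<Longrightarrow> P dvd f2 \<Longrightarrow> P dvd f3 \<Longrightarrow> X = a1*f1 + a2*f2 + a3*f3 \<Longrightarrow> P dvd X"
  by simp
lemma dl4: "(P::int) dvd f1 \<Longrightarrow> P dvd f2 \<Longrightarrow> P dvd f3 \<Longrightarrow> P dvd f4 \<Longrightarrow> X = a1*f1 + a2*f2 + a3*f3 + a4*f4 \<Longrightarrow> P dvd X"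
  by simp

lemma core_sq:
  fixes p :: nat and N D A s r :: int
  assumes p: "prime p" "odd p"
    and hD: "\<not> int p dvd D" and hN: "\<not> int p dvd N"
    and hA: "\<not> int p dvd A" and A: "A = N^2 + D^2"
    and hs: "int p dvd s * A - D^2"
    and hr: "int p dvd r^2 - s"
  shows "(\<exists>y. int p dvd (y^2 - A)^2 - A*D^2) \<longleftrightarrow> int p dvd evs ((p-1) div 2) s - 1"
proof -
  define P where "P = int p"
  define n where "n = (p - 1) div 2"
  have pP: "prime P" using p by (simp add: P_def)
  have pn0: "p = 2*n+1" unfolding n_def using p(2) by (auto elim!: oddE)
  have P2: "\<not> P dvd 2"
  proof
    assume "P dvd 2" hence "p dvd 2" unfolding P_def by (metis int_dvd_int_iff of_nat_numeral)
    hence "p \<le> 2" by (simp add: dvd_imp_le)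
    moreover have "p \<ge> 2" using p prime_ge_2_nat by blast
    ultimately show False using p(2) by simp
  qed
  note hs' = hs[folded P_def] and hr' = hr[folded P_def]
  have hD': "\<not> P dvd D" using hD P_def by simp
  have hN': "\<not> P dvd N" using hN P_def by simp
  have hA': "\<not> P dvd A" using hA P_def by simp
  have hD2: "\<not> P dvd D^2" using hD' pP by (meson prime_dvd_power)
  have hN2: "\<not> P dvd N^2" using hN' pP by (meson prime_dvd_power)
  have hr0: "\<not> P dvd r"
  proof
    assume "P dvd r"
    hence "P dvd r^2 * A" by (simp add: power2_eq_square)
    moreover have "D^2 = r^2 * A - (r^2 - s) * A - (s*A - D^2)" by (simp add: algebra_simps)
    ultimately have "P dvd D^2" using hs' hr' by (metis dvd_diff dvd_mult2)
    thus False using hD2 by simp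
  qed
  have h1p: "\<not> P dvd 1 + r"
  proof
    assume h: "P dvd 1 + r"
    have "N^2 = (1 - r) * (1 + r) * A + (r^2 - s) * A + (s*A - D^2)" using A by (simp add: algebra_simps power2_eq_square)
    hence "P dvd N^2" using h hs' hr' by (metis dvd_add dvd_mult dvd_mult2)
    thus False using hN2 by simp
  qed
  have h1m: "\<not> P dvd 1 - r"
  proof
    assume h: "P dvd 1 - r"
    have "N^2 = (1 + r) * (1 - r) * A + (r^2 - s) * A + (s*A - D^2)" using A by (simp add: algebra_simps power2_eq_square)
    hence "P dvd N^2" using h hs' hr' by (metis dvd_add dvd_mult dvd_mult2)
    thus False using hN2 by simp
  qed
  obtain Di where Di: "P dvd D * Di - 1" using inv_mod[OF pP hD'] by blast
  obtain ri where ri: "P dvd r * ri - 1" using inv_mod[OF pP hr0] by blast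
  define M where "M = D * ri"
  have AM: "P dvd A - M^2"
  proof -
    have "A - M^2 = A * (1 - r*ri) * (1 + r*ri) + ri^2 * ((r^2 - s) * A + (s*A - D^2))"
      unfolding M_def by (simp add: algebra_simps power2_eq_square)
    thus ?thesis using ri hs' hr' by (metis dvd_add dvd_mult dvd_mult2 dvd_minus_iff minus_diff_eq)
  qed
  define u where "u = (1+r)^n"
  define v where "v = (1-r)^n"
  have ev2: "2 * evs n (r^2) = u + v"
    unfolding u_def v_def using binom_split[of r n] binom_split_minus[of r n] by simp
  have evc: "P dvd evs n s - evs n (r^2)" using evs_cong[of P s "r^2"] hr' by (simp add: dvd_diff_commute)
  have n1: "\<not> P dvd 1 - r^2"
  proof -
    have "1 - r^2 = (1-r)*(1+r)" by (simp add: algebra_simps power2_eq_square)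
    thus ?thesis using h1p h1m pP prime_dvd_mult_iff by metis
  qed
  define w where "w = N * r * Di"
  have wq: "P dvd w^2 - (1 - r^2)"
  proof (rule dl4[OF hs' hr' Di Di])
    show "w\<^sup>2 - (1 - r\<^sup>2) = (Di^2) * (s * A - D\<^sup>2) + (Di^2 * A) * (r\<^sup>2 - s) + ((1 - r^2)*(D*Di+1)) * (D * Di - 1) + 0 * (D * Di - 1)"
      unfolding w_def using A by (simp add: algebra_simps power2_eq_square)
  qed
  have "QuadRes P (1 - r^2)" unfolding QuadRes_def using wq by (auto simp: cong_iff_dvd_diff)
  hence "P dvd (1 - r^2)^n - 1" using euler_pm(1)[OF p n1[unfolded P_def]] unfolding P_def n_def by simp
  hence "P dvd (1 - r^2)^n - 1" .
  have uv: "P dvd u * v - 1"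
  proof -
    have "(1 - r^2)^n = u * v" unfolding u_def v_def
      by (simp add: power_mult_distrib[symmetric] algebra_simps power2_eq_square)
    thus ?thesis using \<open>P dvd (1 - r^2)^n - 1\<close> by simp
  qed
  define Lp where "Lp = QuadRes P (1 + r)"
  define Lm where "Lm = QuadRes P (1 - r)"
  have up: "Lp \<Longrightarrow> P dvd u - 1" "\<not> Lp \<Longrightarrow> P dvd u + 1"
    using euler_pm[OF p h1p[unfolded P_def]] unfolding Lp_def u_def P_def n_def by auto
  have vp: "Lm \<Longrightarrow> P dvd v - 1" "\<not> Lm \<Longrightarrow> P dvd v + 1"
    using euler_pm[OF p h1m[unfolded P_def]] unfolding Lm_def v_def P_def n_def by auto
  have LL: "Lp \<longleftrightarrow> Lm"
  proof (cases Lp; cases Lm)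
    assume a: Lp "\<not> Lm"
    have "P dvd 2" by (rule dl3[OF uv up(1)[OF a(1)] vp(2)[OF a(2)], of _ "-1" v 1]) (simp add: algebra_simps)
    thus ?thesis using P2 by simp
  next
    assume a: "\<not> Lp" Lm
    have "P dvd 2" by (rule dl3[OF uv up(2)[OF a(1)] vp(1)[OF a(2)], of _ "-1" v "-1"]) (simp add: algebra_simps)
    thus ?thesis using P2 by simp
  qed auto
  have RHS: "P dvd evs n s - 1 \<longleftrightarrow> Lp"
  proof (cases Lp)
    case True
    hence "P dvd 2 * (evs n s - 1)"
      using dl3[OF evc up(1)[OF True] vp(1)[OF True[unfolded LL]], of _ 2 1 1] ev2 by (simp add: algebra_simps)
    hence "P dvd evs n s - 1" using dvd_cancel_prime[OF pP _ P2] by blast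
    thus ?thesis using True by simp
  next
    case False
    hence "P dvd 2 * (evs n s + 1)"
      using dl3[OF evc up(2)[OF False] vp(2)[OF False[unfolded LL]], of _ 2 1 1] ev2 by (simp add: algebra_simps)
    hence e1: "P dvd evs n s + 1" using dvd_cancel_prime[OF pP _ P2] by blast
    have "\<not> P dvd evs n s - 1"
    proof
      assume "P dvd evs n s - 1"
      hence "P dvd 2" using dl2[OF e1 \<open>P dvd evs n s - 1\<close>, of 2 1 "-1"] by simp
      thus False using P2 by simp
    qed
    thus ?thesis using False by simp
  qed
  have LHS: "(\<exists>y. P dvd (y^2 - A)^2 - A*D^2) \<longleftrightarrow> Lp \<or> Lm"
  proof
    assume "\<exists>y. P dvd (y^2 - A)^2 - A*D^2"
    then obtain y where y: "P dvd (y^2 - A)^2 - A*D^2" by blast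
    have "P dvd (y^2 - A - A*r) * (y^2 - A + A*r)"
      by (rule dl3[OF y hr' hs', of _ 1 "-A*A" "-A"]) (simp add: algebra_simps power2_eq_square)
    hence "P dvd y^2 - A - A*r \<or> P dvd y^2 - A + A*r" using pP prime_dvd_mult_iff by blast
    thus "Lp \<or> Lm"
    proof
      assume h: "P dvd y^2 - A - A*r"
      define z where "z = y * Di * r"
      have "P dvd z^2 - (1 + r)"
        by (rule dl4[OF h hr' hs' Di, of _ "Di^2*r^2" "(1+r)*Di^2*A" "(1+r)*Di^2" "(1+r)*(D*Di+1)"])
           (simp add: z_def algebra_simps power2_eq_square)
      hence Lp unfolding Lp_def QuadRes_def by (auto simp: cong_iff_dvd_diff)
      thus ?thesis by simp
    next
      assume h: "P dvd y^2 - A + A*r"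
      define z where "z = y * Di * r"
      have "P dvd z^2 - (1 - r)"
        by (rule dl4[OF h hr' hs' Di, of _ "Di^2*r^2" "(1-r)*Di^2*A" "(1-r)*Di^2" "(1-r)*(D*Di+1)"])
           (simp add: z_def algebra_simps power2_eq_square)
      hence Lm unfolding Lm_def QuadRes_def by (auto simp: cong_iff_dvd_diff)
      thus ?thesis by simp
    qed
  next
    assume "Lp \<or> Lm"
    thus "\<exists>y. P dvd (y^2 - A)^2 - A*D^2"
    proof
      assume Lp
      then obtain z where "[z^2 = 1 + r] (mod P)" unfolding Lp_def QuadRes_def by blast
      hence z: "P dvd z^2 - (1 + r)" by (simp add: cong_iff_dvd_diff)
      define X where "X = M^2 * (z^2 - (1+r)) - (A - M^2) * (1 + r)"
      have X: "P dvd X" unfolding X_def using z AM by simp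
      have "P dvd ((M*z)^2 - A)^2 - A*D^2"
        by (rule dl3[OF X hr' hs', of _ "2*A*r + X" "A*A" A]) (simp add: X_def algebra_simps power2_eq_square)
      thus ?thesis by blast
    next
      assume Lm
      then obtain z where "[z^2 = 1 - r] (mod P)" unfolding Lm_def QuadRes_def by blast
      hence z: "P dvd z^2 - (1 - r)" by (simp add: cong_iff_dvd_diff)
      define X where "X = M^2 * (z^2 - (1-r)) - (A - M^2) * (1 - r)"
      have X: "P dvd X" unfolding X_def using z AM by simp
      have "P dvd ((M*z)^2 - A)^2 - A*D^2"
        by (rule dl3[OF X hr' hs', of _ "-2*A*r + X" "A*A" A]) (simp add: X_def algebra_simps power2_eq_square)
      thus ?thesis by blast
    qed
  qed
  show ?thesis using LHS RHS LL unfolding P_def n_def by blast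
qed


lemma dl5: "(P::int) dvd f1 \<Longrightarrow> P dvd f2 \<Longrightarrow> P dvd f3 \<Longrightarrow> P dvd f4 \<Longrightarrow> P dvd f5 \<Longrightarrow>
   X = a1*f1 + a2*f2 + a3*f3 + a4*f4 + a5*f5 \<Longrightarrow> P dvd X"
  by simp

lemma core_nsq:
  fixes p :: nat and N D A s :: int
  assumes p: "prime p" "odd p"
    and hD: "\<not> int p dvd D" and hN: "\<not> int p dvd N"
    and hNmD: "\<not> int p dvd (N - D)" and hNpD: "\<not> int p dvd (N + D)"
    and hA: "\<not> int p dvd A" and A: "A = N^2 + D^2"
    and hs: "int p dvd s * A - D^2" and s0: "s > 0"
    and nq: "\<not> QuadRes (int p) s"
  shows "\<not> (\<exists>y. int p dvd (y^2 - A)^2 - A*D^2)" "\<not> int p dvd evs ((p-1) div 2) s - 1"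
proof -
  define P where "P = int p"
  define n where "n = (p - 1) div 2"
  have pP: "prime P" using p by (simp add: P_def)
  have pn0: "p = 2*n+1" unfolding n_def using p(2) by (auto elim!: oddE)
  have P2: "\<not> P dvd 2"
  proof
    assume "P dvd 2" hence "p dvd 2" unfolding P_def by (metis int_dvd_int_iff of_nat_numeral)
    hence "p \<le> 2" by (simp add: dvd_imp_le)
    moreover have "p \<ge> 2" using p prime_ge_2_nat by blast
    ultimately show False using p(2) by simp
  qed
  note hs' = hs[folded P_def]
  have hD': "\<not> P dvd D" using hD P_def by simp
  have hA': "\<not> P dvd A" using hA P_def by simp
  have hD2: "\<not> P dvd D^2" using hD' pP by (meson prime_dvd_power)
  have hs0: "\<not> P dvd s"
  proof
    assume "P dvd s"
    hence "P dvd D^2" using dl2[OF \<open>P dvd s\<close> hs', of _ A "-1"] by simp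
    thus False using hD2 by simp
  qed
  have sn: "P dvd s^n + 1" using euler_pm(2)[OF p hs0[unfolded P_def] nq] unfolding P_def n_def .
  obtain Ai where Ai: "P dvd A * Ai - 1" using inv_mod[OF pP hA'] by blast
  show "\<not> (\<exists>y. int p dvd (y^2 - A)^2 - A*D^2)"
  proof
    assume "\<exists>y. int p dvd (y^2 - A)^2 - A*D^2"
    then obtain y where y: "P dvd (y^2 - A)^2 - A*D^2" unfolding P_def by blast
    have "P dvd ((y^2 - A)*Ai)^2 - s"
      by (rule dl3[OF y hs' Ai, of _ "Ai^2" "- (Ai^2*A)" "s*(A*Ai+1)"]) (simp add: algebra_simps power2_eq_square)
    hence "QuadRes P s" unfolding QuadRes_def by (auto simp: cong_iff_dvd_diff)
    thus False using nq P_def by simp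
  qed
  show "\<not> int p dvd evs ((p-1) div 2) s - 1"
  proof
    assume "int p dvd evs ((p-1) div 2) s - 1"
    hence hE: "P dvd evs n s - 1" unfolding P_def n_def .
    define E where "E = evs n s"
    define F where "F = ods n s"
    define G where "G = evs (2*n) s"
    define H where "H = ods (2*n) s"
    have GE: "G = E^2 + s*F^2" "H = 2*E*F" unfolding E_def F_def G_def H_def using doubling[OF s0] by auto
    define Sg where "Sg = (\<Sum>k\<le>n. s^k)"
    define Sh where "Sh = (\<Sum>k<n. s^k)"
    have gp1: "(1-s)*Sg - (1 - s^(Suc n)) = 0" unfolding Sg_def by (simp add: sum_gp_basic)
    have gp2: "(1-s)*Sh - (1 - s^n) = 0" unfolding Sh_def by (simp add: one_diff_power_eq)
    have hG: "P dvd G - Sg"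
    proof -
      have "G = (\<Sum>k\<le>n. int ((2*n) choose (2*k)) * s^k)"
        unfolding G_def evs_def
        by (rule sum.mono_neutral_right) (auto simp: binomial_eq_0)
      moreover have "[(\<Sum>k\<le>n. int ((2*n) choose (2*k)) * s^k) = Sg] (mod P)"
        unfolding Sg_def
      proof (rule cong_sum)
        fix k assume "k \<in> {..n}"
        hence "2*k \<le> p - 1" using pn0 by simp
        hence "[int ((p-1) choose (2*k)) = (-1)^(2*k)] (mod P)" using choose_pm1[OF p(1), of "2*k"] P_def by blast
        hence "[int ((2*n) choose (2*k)) = 1] (mod P)" using pn0 by simp
        thus "[int ((2*n) choose (2*k)) * s^k = s^k] (mod P)" using cong_mult[of _ 1 P "s^k" "s^k"] by simp
      qed
      ultimately show ?thesis by (simp add: cong_iff_dvd_diff)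
    qed
    have hH: "P dvd H + Sh"
    proof -
      have "H = (\<Sum>k<n. int ((2*n) choose (2*k+1)) * s^k)"
        unfolding H_def ods_def
        by (rule sum.mono_neutral_right) (auto simp: binomial_eq_0)
      moreover have "[(\<Sum>k<n. int ((2*n) choose (2*k+1)) * s^k) = (\<Sum>k<n. - (s^k))] (mod P)"
      proof (rule cong_sum)
        fix k assume "k \<in> {..<n}"
        hence "2*k+1 \<le> p - 1" using pn0 by simp
        hence "[int ((p-1) choose (2*k+1)) = (-1)^(2*k+1)] (mod P)" using choose_pm1[OF p(1), of "2*k+1"] P_def by blast
        hence "[int ((2*n) choose (2*k+1)) = -1] (mod P)" using pn0 by simp
        thus "[int ((2*n) choose (2*k+1)) * s^k = - (s^k)] (mod P)" using cong_mult[of _ "-1" P "s^k" "s^k"] by simp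
      qed
      moreover have "(\<Sum>k<n. - (s^k)) = - Sh" unfolding Sh_def by (simp add: sum_negf)
      ultimately show ?thesis by (simp add: cong_iff_dvd_diff)
    qed
    define W where "W = (1-s)*F"
    have z2: "P dvd (1-s)*Sh - (1 - s^n)" using gp2 by simp
    have "P dvd 2*(W+1)"
      by (rule dl4[OF hE hH z2 sn, of _ "-2*F*(1-s)" "1-s" "-1" 1])
         (simp add: W_def GE E_def algebra_simps power2_eq_square)
    hence W1: "P dvd W + 1" using dvd_cancel_prime[OF pP _ P2] by blast
    have z1: "P dvd (1-s)*Sg - (1 - s^(Suc n))" using gp1 by simp
    have "P dvd s*(2*s - 1)"
      by (rule dl5[OF hG hE z1 sn W1, of _ "(1-s)^2" "- ((1-s)^2*(E+1))" "1-s" "- (s*(1-s))" "- (s*(W-1))"])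
         (simp add: W_def GE E_def algebra_simps power2_eq_square)
    hence s2: "P dvd 2*s - 1" using dvd_cancel_prime[OF pP _ hs0] by blast
    have "P dvd (D - N) * (D + N)"
      by (rule dl2[OF s2 hs', of _ A "-2"]) (simp add: A algebra_simps power2_eq_square)
    hence "P dvd D - N \<or> P dvd D + N" using pP prime_dvd_mult_iff by blast
    thus False using hNmD hNpD P_def by (metis dvd_minus_iff minus_diff_eq add.commute)
  qed
qed



lemma core:
  fixes p :: nat and N D :: int
  assumes p: "prime p" "odd p" and hD: "\<not> int p dvd D" and hN: "\<not> int p dvd N" and hNmD: "\<not> int p dvd (N - D)"
    and hNpD: "\<not> int p dvd (N + D)" and hA0: "\<not> int p dvd (N^2 + D^2)"
  shows "(\<exists>x::int. int p dvd (D^4*x^4 - 2*(N^2+D^2)*D^2*x^2 + N^2*(N^2+D^2))) \<longleftrightarrow>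
     int p dvd (\<Sum>k=1..p div 4. int ((4*k) choose (2*k)) * D^(2*k) * (16*(N^2+D^2))^(p div 4 - k))"
proof -
  define P where "P = int p"
  define n where "n = (p - 1) div 2"
  define q where "q = p div 4"
  define A where "A = N^2 + D^2"
  have pP: "prime P" using p by (simp add: P_def)
  have pn0: "p = 2*n+1" unfolding n_def using p(2) by (auto elim!: oddE)
  have qn: "q = n div 2" unfolding q_def using pn0 by simp
  have P2: "\<not> P dvd 2"
  proof
    assume "P dvd 2" hence "p dvd 2" unfolding P_def by (metis int_dvd_int_iff of_nat_numeral)
    hence "p \<le> 2" by (simp add: dvd_imp_le)
    moreover have "p \<ge> 2" using p prime_ge_2_nat by blast
    ultimately show False using p(2) by simp
  qed
  have P16: "\<not> P dvd 16"
  proof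
    assume "P dvd 16" hence "P dvd 2^4" by simp
    thus False using P2 pP prime_dvd_power by blast
  qed
  have hA: "\<not> P dvd A" using hA0 by (simp add: A_def P_def)
  have hD': "\<not> P dvd D" using hD P_def by simp
  obtain Ai where Ai: "P dvd A * Ai - 1" using inv_mod[OF pP hA] by blast
  obtain Di where Di: "P dvd D * Di - 1" using inv_mod[OF pP hD'] by blast
  define s where "s = (D^2 * Ai) mod P"
  have P0: "P > 0" using pP prime_gt_0_int by blast
  have sm: "P dvd s - D^2 * Ai" unfolding s_def
    by (metis dvd_minus_iff dvd_triv_left minus_diff_eq minus_mod_eq_mult_div)
  have hs: "P dvd s * A - D^2"
    by (rule dl2[OF sm Ai, of _ A "D^2"]) (simp add: algebra_simps)
  have hs0: "\<not> P dvd s"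
  proof
    assume "P dvd s"
    hence "P dvd D^2" using dl2[OF \<open>P dvd s\<close> hs, of _ A "-1"] by simp
    thus False using hD' pP by (meson prime_dvd_power)
  qed
  have s0: "s > 0"
  proof -
    have "s \<ge> 0" unfolding s_def using P0 by simp
    moreover have "s \<noteq> 0" using hs0 by auto
    ultimately show ?thesis by simp
  qed
  have LHS: "(\<exists>x::int. int p dvd (D^4*x^4 - 2*(N^2+D^2)*D^2*x^2 + N^2*(N^2+D^2)))
      \<longleftrightarrow> (\<exists>y. P dvd (y^2 - A)^2 - A*D^2)"
  proof
    assume "\<exists>x::int. int p dvd (D^4*x^4 - 2*(N^2+D^2)*D^2*x^2 + N^2*(N^2+D^2))"
    then obtain x where x: "P dvd (D^4*x^4 - 2*(N^2+D^2)*D^2*x^2 + N^2*(N^2+D^2))" unfolding P_def by blast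
    have "((D*x)^2 - A)^2 - A*D^2 = D^4*x^4 - 2*(N^2+D^2)*D^2*x^2 + N^2*(N^2+D^2)"
      unfolding A_def by (simp add: algebra_simps power2_eq_square power4_eq_xxxx)
    thus "\<exists>y. P dvd (y^2 - A)^2 - A*D^2" using x by metis
  next
    assume "\<exists>y. P dvd (y^2 - A)^2 - A*D^2"
    then obtain y where y: "P dvd (y^2 - A)^2 - A*D^2" by blast
    have "P dvd ((D*(y*Di))^2 - A)^2 - A*D^2"
      by (rule dl2[OF y Di, of _ 1 "y^2*(D*Di+1)*((D*(y*Di))^2 + y^2 - 2*A)"])
         (simp add: algebra_simps power2_eq_square)
    moreover have "((D*(y*Di))^2 - A)^2 - A*D^2 = D^4*(y*Di)^4 - 2*(N^2+D^2)*D^2*(y*Di)^2 + N^2*(N^2+D^2)"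
      unfolding A_def by (simp add: algebra_simps power2_eq_square power4_eq_xxxx)
    ultimately show "\<exists>x::int. int p dvd (D^4*x^4 - 2*(N^2+D^2)*D^2*x^2 + N^2*(N^2+D^2))"
      unfolding P_def by metis
  qed
  define S1 where "S1 = (\<Sum>k=1..q. int (n choose (2*k)) * s^k)"
  have ev1: "evs n s = 1 + S1"
  proof -
    have "evs n s = (\<Sum>k\<le>q. int (n choose (2*k)) * s^k)"
      unfolding evs_def using qn by (intro sum.mono_neutral_right) (auto simp: binomial_eq_0)
    also have "{..q} = insert 0 {1..q}" by auto
    finally show ?thesis unfolding S1_def by simp
  qed
  have Tc: "[(\<Sum>k=1..q. int ((4*k) choose (2*k)) * D^(2*k) * (16*A)^(q - k)) = (\<Sum>k=1..q. 16^q * A^q * (int (n choose (2*k)) * s^k))] (mod P)"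
  proof (rule cong_sum)
    fix k assume k: "k \<in> {1..q}"
    have kn: "2*k \<le> n" using k qn by auto
    have c1: "[int ((2*(2*k)) choose (2*k)) = (-4)^(2*k) * int (n choose (2*k))] (mod P)"
      using central_cong[OF p kn[unfolded n_def]] unfolding P_def n_def .
    have c1': "[int ((4*k) choose (2*k)) = 16^k * int (n choose (2*k))] (mod P)"
      using c1 by (simp add: power_mult)
    have c2: "[D^2 = s*A] (mod P)" using hs by (simp add: cong_iff_dvd_diff dvd_diff_commute)
    have c2': "[D^(2*k) = (s*A)^k] (mod P)" using cong_pow[OF c2, of k] by (simp add: power_mult)
    have cg: "[int ((4*k) choose (2*k)) * D^(2*k) * (16*A)^(q - k) = 16^k * int (n choose (2*k)) * (s*A)^k * (16*A)^(q - k)] (mod P)"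
      by (intro cong_mult c1' c2' cong_refl)
    have eq: "16^k * int (n choose (2*k)) * (s*A)^k * (16*A)^(q - k) = 16^q * A^q * (int (n choose (2*k)) * s^k)"
    proof -
      have qk: "q = k + (q - k)" using k by simp
      have "(16::int)^q * A^q = (16*A)^q" by (simp add: power_mult_distrib)
      also have "\<dots> = (16*A)^k * (16*A)^(q-k)" by (subst qk) (simp only: power_add)
      finally show ?thesis by (simp add: power_mult_distrib algebra_simps)
    qed
    show "[int ((4*k) choose (2*k)) * D^(2*k) * (16*A)^(q - k) = 16^q * A^q * (int (n choose (2*k)) * s^k)] (mod P)"
      using cg unfolding eq .
  qed
  have sS: "(\<Sum>k=1..q. 16^q * A^q * (int (n choose (2*k)) * s^k)) = 16^q * A^q * S1"
    unfolding S1_def by (simp add: sum_distrib_left)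
  have Tc': "P dvd (\<Sum>k=1..q. int ((4*k) choose (2*k)) * D^(2*k) * (16*A)^(q - k)) \<longleftrightarrow> P dvd 16^q * A^q * S1"
    using cong_dvd_iff[OF Tc] unfolding sS .
  have "\<not> P dvd 16^q" using P16 pP prime_dvd_power by blast
  moreover have "\<not> P dvd A^q" using hA pP prime_dvd_power by blast
  ultimately have "\<not> P dvd 16^q * A^q" using pP prime_dvd_mult_iff by blast
  hence "P dvd 16^q * A^q * S1 \<longleftrightarrow> P dvd S1" using pP prime_dvd_mult_iff by blast
  hence RHS: "int p dvd (\<Sum>k=1..p div 4. int ((4*k) choose (2*k)) * D^(2*k) * (16*(N^2+D^2))^(p div 4 - k))
     \<longleftrightarrow> P dvd evs n s - 1"
    using Tc' ev1 unfolding P_def q_def A_def by simp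
  show ?thesis
  proof (cases "QuadRes P s")
    case True
    then obtain r where "[r^2 = s] (mod P)" unfolding QuadRes_def by blast
    hence hr: "P dvd r^2 - s" by (simp add: cong_iff_dvd_diff)
    show ?thesis unfolding LHS RHS
      using core_sq[OF p hD hN, of A s r] hA hs hr unfolding P_def A_def n_def by simp
  next
    case False
    show ?thesis unfolding LHS RHS
      using core_nsq[OF p hD hN hNmD hNpD, of A s] hA hs s0 False unfolding P_def A_def n_def by simp
  qed
qed



lemma genL: "(d::rat) \<noteq> 0 \<Longrightarrow> x^4 - 2*((n/d)^2+1)*x^2 + (n/d)^2*((n/d)^2+1) = (d^4*x^4 - 2*(n^2+d^2)*d^2*x^2 + n^2*(n^2+d^2))/d^4"
  apply (simp add: field_simps)
  apply (simp add: eval_nat_numeral algebra_simps)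
  done

theorem corollary2p4:
  fixes p :: nat and c :: rat
  assumes "prime p" and "odd p"
    and "in_Zp p c"
    and "\<not> rat_cong c 0 p" and "\<not> rat_cong c 1 p" and "\<not> rat_cong c (-1) p"
    and "\<not> rat_cong (c^2 + 1) 0 p"
  shows "(\<exists>x::int. rat_cong ((of_int x)^4 - 2*(c^2+1)*(of_int x)^2 + c^2*(c^2+1)) 0 p)
     \<longleftrightarrow> rat_cong (\<Sum>k=1..p div 4. of_nat ((4*k) choose (2*k)) / (16*(c^2+1))^k) 0 p"
proof -
  obtain N D where q: "quotient_of c = (N, D)" by (cases "quotient_of c") auto
  have D0: "D > 0" using q quotient_of_denom_pos by blast
  have c: "c = of_int N / of_int D" using q quotient_of_div by blast
  have pD: "\<not> int p dvd D" using assms(3) q by (simp add: in_Zp_def)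
  have pp: "prime (int p)" using assms(1) by simp
  have pD2: "\<not> int p dvd D^2" using pD pp by (meson prime_dvd_power)
  have pD4: "\<not> int p dvd D^4" using pD pp by (meson prime_dvd_power)
  define A where "A = N^2 + D^2"
  have eq_ge: "\<And>X Y::rat. rat_cong X 0 p \<Longrightarrow> X = Y \<Longrightarrow> rat_cong Y 0 p" by simp
  have cdiv: "c - 1 = of_int (N - D) / of_int D" "c = of_int N / of_int D"
     "c - (-1) = of_int (N + D) / of_int D" "c^2 + 1 - 0 = of_int A / of_int (D^2)"
    using D0 by (simp_all add: c field_simps A_def power2_eq_square)
  have rc: "\<And>x y. rat_cong (x - y) 0 p \<Longrightarrow> in_Zp p x \<Longrightarrow> in_Zp p y \<Longrightarrow> rat_cong x y p"
    by (simp add: rat_cong_def)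
  have z1: "in_Zp p 1" "in_Zp p (-1)" using assms(1) by (auto simp: in_Zp_def)
  have h1: "\<not> int p dvd N" using assms(4) rat_frac_cong0[OF assms(1), of D N] D0 pD c by simp
  have h2: "\<not> int p dvd (N - D)"
  proof
    assume "int p dvd (N - D)"
    hence "rat_cong (c - 1) 0 p" using rat_frac_cong0[OF assms(1), of D "N - D"] D0 pD cdiv(1) by simp
    thus False using rc[of c 1] z1 assms(3,5) by simp
  qed
  have h3: "\<not> int p dvd (N + D)"
  proof
    assume "int p dvd (N + D)"
    hence "rat_cong (c - (-1)) 0 p" using rat_frac_cong0[OF assms(1), of D "N + D"] D0 pD cdiv(3) by simp
    thus False using rc[of c "-1"] z1 assms(3,6) by blast
  qed
  have h4: "\<not> int p dvd A" using assms(7) rat_frac_cong0[OF assms(1), of "D^2" A] D0 pD2 cdiv by simp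
  have L: "(of_int x)^4 - 2*(c^2+1)*(of_int x)^2 + c^2*(c^2+1)
      = of_int (D^4*x^4 - 2*(N^2+D^2)*D^2*x^2 + N^2*(N^2+D^2)) / of_int (D^4)" for x :: int
    using genL[of "of_int D" "of_int x" "of_int N"] D0 unfolding c by simp
  have 16: "\<not> int p dvd 16"
  proof
    assume "int p dvd 16"
    hence "int p dvd 2^4" by simp
    hence "int p dvd 2" using pp prime_dvd_power by blast
    hence "p dvd 2" by (metis int_dvd_int_iff of_nat_numeral)
    hence "p \<le> 2" by (simp add: dvd_imp_le)
    moreover have "p \<ge> 2" using assms(1) prime_ge_2_nat by blast
    ultimately show False using assms(2) by simp
  qed
  have pq: "\<not> int p dvd (16*A)^(p div 4)" using h4 16 pp by (metis prime_dvd_mult_iff prime_dvd_power)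
  have R: "(\<Sum>k=1..p div 4. of_nat ((4*k) choose (2*k)) / (16*(c^2+1))^k)
     = of_int (\<Sum>k=1..p div 4. int ((4*k) choose (2*k)) * D^(2*k) * (16*(N^2+D^2))^(p div 4 - k)) / of_int ((16*A)^(p div 4))"
  proof -
    have cc: "16*(c^2+1) = of_int (16*A) / of_int (D^2)" using cdiv(4) by simp
    have W0: "(of_int (16*A) :: rat) \<noteq> 0" using h4 by auto
    have trm: "of_nat ((4*k) choose (2*k)) / (of_int (16*A) / of_int (D^2))^k
       = of_int (int ((4*k) choose (2*k)) * D^(2*k) * (16*(N^2+D^2))^(p div 4 - k)) / (of_int ((16*A)^(p div 4)) :: rat)"
      if "k \<in> {1..p div 4}" for k
    proof -
      have kq: "p div 4 = k + (p div 4 - k)" using that by simp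
      have "(of_int ((16*A)^(p div 4)) :: rat) = of_int (16*A)^k * of_int (16*A)^(p div 4 - k)"
        by (subst kq) (simp only: power_add of_int_power of_int_mult)
      thus ?thesis using W0 D0 by (simp add: power_divide field_simps A_def power_mult) (metis power_mult power_mult_distrib mult.commute)
    qed
    show ?thesis unfolding cc of_int_sum sum_divide_distrib using trm by (intro sum.cong) auto
  qed
  have nz1: "D^4 \<noteq> 0" using D0 by simp
  have nz2: "(16*A)^(p div 4) \<noteq> 0" using pq by (metis dvd_0_right)
  have E1: "rat_cong ((of_int x)^4 - 2*(c^2+1)*(of_int x)^2 + c^2*(c^2+1)) 0 p \<longleftrightarrow>
     int p dvd (D^4*x^4 - 2*(N^2+D^2)*D^2*x^2 + N^2*(N^2+D^2))" for x :: int
    unfolding L using rat_frac_cong0[OF assms(1) nz1 pD4] .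
  have E2: "rat_cong (\<Sum>k=1..p div 4. of_nat ((4*k) choose (2*k)) / (16*(c^2+1))^k) 0 p \<longleftrightarrow>
     int p dvd (\<Sum>k=1..p div 4. int ((4*k) choose (2*k)) * D^(2*k) * (16*(N^2+D^2))^(p div 4 - k))"
    unfolding R using rat_frac_cong0[OF assms(1) nz2 pq] .
  show ?thesis unfolding E1 E2 using core[OF assms(1,2) pD h1 h2 h3 h4[unfolded A_def]] .
qed


end
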